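(* Let $\Gamma$ be a finite set of models, $p(\bm{y}\mid\bm{\gamma})\ge0$ a marginal likelihood for each $\bm{\gamma}\in\Gamma$, and $\pi(\bm{\gamma}\mid\bm{\omega})$, $\bm{\omega}\in\mathbb{R}^q$, an arbitrary model prior (positive and differentiable in $\bm{\omega}$). Let $p(\bm{y}\mid\bm{\omega})=\sum_{\bm{\gamma}}p(\bm{y}\mid\bm{\gamma})\pi(\bm{\gamma}\mid\bm{\omega})>0$ and $\pi(\bm{\gamma}\mid\bm{y},\bm{\omega})\propto p(\bm{y}\mid\bm{\gamma})\pi(\bm{\gamma}\mid\bm{\omega})$. Then $$\nabla_{\bm{\omega}}\log p(\bm{y}\mid\bm{\omega})=E_{\bm{\gamma}}\big[\nabla_{\bm{\omega}}\log\pi(\bm{\gamma}\mid\bm{\omega})\mid\bm{y},\bm{\omega}\big]=\sum_{\bm{\gamma}}\pi(\bm{\gamma}\mid\bm{y},\bm{\omega})\nabla_{\bm{\omega}}\log\pi(\bm{\gamma}\mid\bm{\omega}).$$ If $\Gamma=\{0,1\}^p$ and $\pi(\bm{\gamma}\mid\bm{\omega})=\prod_{j=1}^p\mathrm{Bern}(\gamma_j;m_j(\bm{\omega}))$ for given differentiable $m_j:\mathbb{R}^q\to(0,1)$, then $$\nabla_{\bm{\omega}}\log p(\bm{y}\mid\bm{\omega})=\sum_{j=1}^p\frac{\nabla_{\bm{\omega}}m_j(\bm{\omega})}{m_j(\bm{\omega})[1-m_j(\bm{\omega})]}\big[\pi(\gamma_j=1\mid\bm{y},\bm{\omega})-\pi(\gamma_j=1\mid\bm{\omega})\big].$$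 Further, for the inverse logit $m_j(\bm{\omega})=(1+e^{-\bm{z}_j^T\bm{\omega}})^{-1}$ with given $\bm{z}_j\in\mathbb{R}^q$, $\nabla_{\bm{\omega}}\log p(\bm{y}\mid\bm{\omega})=\sum_{j=1}^p\bm{z}_j\big[\pi(\gamma_j=1\mid\bm{y},\bm{\omega})-\pi(\gamma_j=1\mid\bm{\omega})\big]$.
   Context: $\pi(\gamma_j=1\mid\bm{y},\bm{\omega})=\sum_{\bm{\gamma}:\gamma_j=1}\pi(\bm{\gamma}\mid\bm{y},\bm{\omega})$ is the posterior inclusion probability and $\pi(\gamma_j=1\mid\bm{\omega})=m_j(\bm{\omega})$ the prior inclusion probability. *)

theory Defs
  imports "HOL-Analysis.Analysis"
begin

definition marg :: "'g set \<Rightarrow> ('g \<Rightarrow> real) \<Rightarrow> ('g \<Rightarrow> 'w \<Rightarrow> real) \<Rightarrow> 'w \<Rightarrow> real" where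
  "marg \<Gamma> lik prior \<omega> = (\<Sum>\<gamma>\<in>\<Gamma>. lik \<gamma> * prior \<gamma> \<omega>)"

definition post :: "'g set \<Rightarrow> ('g \<Rightarrow> real) \<Rightarrow> ('g \<Rightarrow> 'w \<Rightarrow> real) \<Rightarrow> 'g \<Rightarrow> 'w \<Rightarrow> real" where
  "post \<Gamma> lik prior \<gamma> \<omega> = lik \<gamma> * prior \<gamma> \<omega> / marg \<Gamma> lik prior \<omega>"

definition grad :: "('a::real_inner \<Rightarrow> real) \<Rightarrow> 'a \<Rightarrow> 'a" where
  "grad f x = (THE g. GDERIV f x :> g)"

definition binary_models :: "nat \<Rightarrow> (nat \<Rightarrow> nat) set" where
  "binary_models p = {\<gamma>. (\<forall>j\<in>{1..p}. \<gamma> j \<in> {0,1}) \<and> (\<forall>j. j \<notin> {1..p} \<longrightarrow> \<gamma> j = 0)}"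

definition bern :: "nat \<Rightarrow> real \<Rightarrow> real" where
  "bern g m = m ^ g * (1 - m) ^ (1 - g)"

definition bern_prior :: "nat \<Rightarrow> (nat \<Rightarrow> 'w \<Rightarrow> real) \<Rightarrow> (nat \<Rightarrow> nat) \<Rightarrow> 'w \<Rightarrow> real" where
  "bern_prior p m \<gamma> \<omega> = (\<Prod>j=1..p. bern (\<gamma> j) (m j \<omega>))"

definition incl_post :: "'a set \<Rightarrow> ('a \<Rightarrow> real) \<Rightarrow> ('a \<Rightarrow> 'w \<Rightarrow> real) \<Rightarrow> ('a \<Rightarrow> nat \<Rightarrow> nat) \<Rightarrow> nat \<Rightarrow> 'w \<Rightarrow> real" where
  "incl_post \<Gamma> lik prior coord j \<omega> = (\<Sum>\<gamma>\<in>{\<gamma>\<in>\<Gamma>. coord \<gamma> j = 1}. post \<Gamma> lik prior \<gamma> \<omega>)"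

definition inv_logit :: "'a::real_inner \<Rightarrow> 'a \<Rightarrow> real" where
  "inv_logit z \<omega> = 1 / (1 + exp (- (z \<bullet> \<omega>)))"

end

theory Submission
  imports Defs
begin

lemma lin_rep:
  fixes L :: "'a::euclidean_space \<Rightarrow> real"
  assumes "linear L"
  shows "L h = h \<bullet> (\<Sum>b\<in>Basis. L b *\<^sub>R b)"
proof -
  have "L h = L (\<Sum>b\<in>Basis. (h \<bullet> b) *\<^sub>R b)" by (simp add: euclidean_representation)
  also have "\<dots> = (\<Sum>b\<in>Basis. (h \<bullet> b) * L b)"
    using assms by (simp add: linear_sum linear_scale)
  also have "\<dots> = h \<bullet> (\<Sum>b\<in>Basis. L b *\<^sub>R b)"
    by (simp add: inner_sum_right mult.commute)
  finally show ?thesis .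
qed

lemma gderiv_unique:
  fixes f :: "'a::euclidean_space \<Rightarrow> real"
  assumes "GDERIV f x :> a" "GDERIV f x :> b" shows "a = b"
proof -
  have "(\<lambda>h. h \<bullet> a) = (\<lambda>h. h \<bullet> b)"
    using assms unfolding gderiv_def by (rule has_derivative_unique)
  then have "(a - b) \<bullet> a = (a - b) \<bullet> b" by metis
  then have "(a - b) \<bullet> (a - b) = 0" by (simp add: inner_diff_right)
  then show ?thesis by simp
qed

lemma gderiv_exists:
  fixes f :: "'a::euclidean_space \<Rightarrow> real"
  assumes "f differentiable (at x)" shows "\<exists>g. GDERIV f x :> g"
proof -
  obtain L where L: "(f has_derivative L) (at x)" using assms differentiable_def by blast
  then have "linear L" using has_derivative_linear by blast
  then have "L = (\<lambda>h. h \<bullet> (\<Sum>b\<in>Basis. L b *\<^sub>R b))" using lin_rep by blast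
  then show ?thesis using L unfolding gderiv_def by metis
qed

lemma grad_eq:
  fixes f :: "'a::euclidean_space \<Rightarrow> real"
  assumes "GDERIV f x :> g" shows "grad f x = g"
  unfolding grad_def using assms gderiv_unique by blast

lemma grad_works:
  fixes f :: "'a::euclidean_space \<Rightarrow> real"
  assumes "f differentiable (at x)" shows "GDERIV f x :> grad f x"
  using gderiv_exists[OF assms] grad_eq by metis

lemma gderiv_differentiable:
  "GDERIV f x :> g \<Longrightarrow> f differentiable (at x)"
  unfolding gderiv_def differentiable_def by blast

lemma GDERIV_sum:
  assumes "finite S" "\<And>i. i \<in> S \<Longrightarrow> GDERIV (f i) x :> d i"
  shows "GDERIV (\<lambda>x. \<Sum>i\<in>S. f i x) x :> (\<Sum>i\<in>S. d i)"
  using assms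
proof (induction S rule: finite_induct)
  case empty
  then show ?case by (simp add: GDERIV_const)
next
  case (insert a S)
  then show ?case by (simp add: GDERIV_add)
qed

lemma differentiable_prod_fin:
  fixes f :: "'i \<Rightarrow> 'a::real_normed_vector \<Rightarrow> real"
  assumes "finite S" "\<And>i. i \<in> S \<Longrightarrow> f i differentiable (at x)"
  shows "(\<lambda>x. \<Prod>i\<in>S. f i x) differentiable (at x)"
  using assms
proof (induction S rule: finite_induct)
  case empty
  then show ?case by simp
next
  case (insert a S)
  then show ?case by (simp add: differentiable_mult)
qed


lemma part1:
  fixes prior :: "'g \<Rightarrow> 'a::euclidean_space \<Rightarrow> real"
  assumes fin: "finite \<Gamma>" and pos: "\<And>\<gamma> w. \<gamma> \<in> \<Gamma> \<Longrightarrow> prior \<gamma> w > 0"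
    and dif: "\<And>\<gamma>. \<gamma> \<in> \<Gamma> \<Longrightarrow> prior \<gamma> differentiable (at \<omega>)"
    and mpos: "marg \<Gamma> lik prior \<omega> > 0"
  shows "GDERIV (\<lambda>w. ln (marg \<Gamma> lik prior w)) \<omega> :>
            (\<Sum>\<gamma>\<in>\<Gamma>. post \<Gamma> lik prior \<gamma> \<omega> *\<^sub>R grad (\<lambda>w. ln (prior \<gamma> w)) \<omega>)"
proof -
  define D where "D \<gamma> = grad (prior \<gamma>) \<omega>" for \<gamma>
  have dp: "GDERIV (prior \<gamma>) \<omega> :> D \<gamma>" if "\<gamma> \<in> \<Gamma>" for \<gamma>
    unfolding D_def using grad_works dif that by blast
  have dt: "GDERIV (\<lambda>w. lik \<gamma> * prior \<gamma> w) \<omega> :> lik \<gamma> *\<^sub>R D \<gamma>" if "\<gamma> \<in> \<Gamma>" for \<gamma>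
    using GDERIV_mult[OF GDERIV_const dp[OF that], of "lik \<gamma>"] by simp
  have dm: "GDERIV (marg \<Gamma> lik prior) \<omega> :> (\<Sum>\<gamma>\<in>\<Gamma>. lik \<gamma> *\<^sub>R D \<gamma>)"
    unfolding marg_def[abs_def] using GDERIV_sum[OF fin dt] by simp
  have dl: "GDERIV (\<lambda>w. ln (marg \<Gamma> lik prior w)) \<omega> :>
      inverse (marg \<Gamma> lik prior \<omega>) *\<^sub>R (\<Sum>\<gamma>\<in>\<Gamma>. lik \<gamma> *\<^sub>R D \<gamma>)"
    by (rule GDERIV_DERIV_compose[OF dm DERIV_ln[OF mpos]])
  have gl: "grad (\<lambda>w. ln (prior \<gamma> w)) \<omega> = inverse (prior \<gamma> \<omega>) *\<^sub>R D \<gamma>" if "\<gamma> \<in> \<Gamma>" for \<gamma>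
    by (rule grad_eq, rule GDERIV_DERIV_compose[OF dp[OF that] DERIV_ln[OF pos[OF that]]])
  have "(\<Sum>\<gamma>\<in>\<Gamma>. post \<Gamma> lik prior \<gamma> \<omega> *\<^sub>R grad (\<lambda>w. ln (prior \<gamma> w)) \<omega>)
      = (\<Sum>\<gamma>\<in>\<Gamma>. inverse (marg \<Gamma> lik prior \<omega>) *\<^sub>R (lik \<gamma> *\<^sub>R D \<gamma>))"
  proof (rule sum.cong[OF refl])
    fix \<gamma> assume g: "\<gamma> \<in> \<Gamma>"
    have "prior \<gamma> \<omega> \<noteq> 0" using pos[OF g, of \<omega>] by simp
    then show "post \<Gamma> lik prior \<gamma> \<omega> *\<^sub>R grad (\<lambda>w. ln (prior \<gamma> w)) \<omega>
        = inverse (marg \<Gamma> lik prior \<omega>) *\<^sub>R (lik \<gamma> *\<^sub>R D \<gamma>)"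
      unfolding gl[OF g] post_def by (simp add: field_simps)
  qed
  also have "\<dots> = inverse (marg \<Gamma> lik prior \<omega>) *\<^sub>R (\<Sum>\<gamma>\<in>\<Gamma>. lik \<gamma> *\<^sub>R D \<gamma>)"
    by (simp add: scaleR_sum_right)
  finally show ?thesis using dl by simp
qed


lemma finite_binary_models: "finite (binary_models p)"
proof -
  have "binary_models p = {f. \<forall>x. (x \<in> {1..p} \<longrightarrow> f x \<in> {0,1}) \<and> (x \<notin> {1..p} \<longrightarrow> f x = 0)}"
    unfolding binary_models_def by auto
  then show ?thesis using finite_set_of_finite_funs[of "{1..p}" "{0::nat,1}" 0] by simp
qed

lemma bern_cases: "g \<in> {0,1} \<Longrightarrow> bern g m = (if g = 1 then m else 1 - m)"
  unfolding bern_def by auto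

lemma part2:
  fixes m :: "nat \<Rightarrow> 'a::euclidean_space \<Rightarrow> real"
  assumes mm: "\<And>j w. j \<in> {1..p} \<Longrightarrow> 0 < m j w \<and> m j w < 1 \<and> m j differentiable (at w)"
    and mpos: "\<And>w. marg (binary_models p) lik (bern_prior p m) w > 0"
  shows "GDERIV (\<lambda>w. ln (marg (binary_models p) lik (bern_prior p m) w)) \<omega> :>
            (\<Sum>j=1..p. ((incl_post (binary_models p) lik (bern_prior p m) (\<lambda>\<gamma>. \<gamma>) j \<omega> - m j \<omega>)
                         / (m j \<omega> * (1 - m j \<omega>))) *\<^sub>R grad (m j) \<omega>)"
proof -
  define B where "B = binary_models p"
  have finB: "finite B" unfolding B_def by (rule finite_binary_models)
  have Bj: "\<gamma> j \<in> {0,1}" if "\<gamma> \<in> B" "j \<in> {1..p}" for \<gamma> j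
    using that unfolding B_def binary_models_def by auto
  have bpos: "bern (\<gamma> j) (m j w) > 0" if "\<gamma> \<in> B" "j \<in> {1..p}" for \<gamma> j w
    using bern_cases[OF Bj[OF that]] mm[OF that(2), of w] by simp
  have ppos: "bern_prior p m \<gamma> w > 0" if "\<gamma> \<in> B" for \<gamma> w
    unfolding bern_prior_def using bpos[OF that] by (intro prod_pos) auto
  have bdif: "(\<lambda>w. bern (\<gamma> j) (m j w)) differentiable (at w)" if "\<gamma> \<in> B" "j \<in> {1..p}" for \<gamma> j w
  proof -
    have md: "m j differentiable (at w)" using mm[OF that(2)] by blast
    have "(\<lambda>w. bern (\<gamma> j) (m j w)) = (\<lambda>w. if \<gamma> j = 1 then m j w else 1 - m j w)"
      using bern_cases[OF Bj[OF that]] by auto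
    then show ?thesis using md by (cases "\<gamma> j = 1") (auto intro: differentiable_diff)
  qed
  have pdif: "bern_prior p m \<gamma> differentiable (at \<omega>)" if "\<gamma> \<in> B" for \<gamma>
    unfolding bern_prior_def[abs_def]
    by (rule differentiable_prod_fin) (auto intro: bdif[OF that])
  have P1: "GDERIV (\<lambda>w. ln (marg B lik (bern_prior p m) w)) \<omega> :>
      (\<Sum>\<gamma>\<in>B. post B lik (bern_prior p m) \<gamma> \<omega> *\<^sub>R grad (\<lambda>w. ln (bern_prior p m \<gamma> w)) \<omega>)"
    by (rule part1[OF finB ppos pdif mpos[folded B_def]]) auto
  define G where "G j = grad (m j) \<omega>" for j
  define c where "c \<gamma> j = (real (\<gamma> j) - m j \<omega>) / (m j \<omega> * (1 - m j \<omega>))" for \<gamma> :: "nat \<Rightarrow> nat" and j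
  have gG: "GDERIV (m j) \<omega> :> G j" if "j \<in> {1..p}" for j
    unfolding G_def using grad_works mm[OF that] by blast
  have dterm: "GDERIV (\<lambda>w. ln (bern (\<gamma> j) (m j w))) \<omega> :> c \<gamma> j *\<^sub>R G j"
    if g: "\<gamma> \<in> B" and j: "j \<in> {1..p}" for \<gamma> j
  proof -
    have m0: "m j \<omega> > 0" "m j \<omega> < 1" using mm[OF j] by auto
    show ?thesis
    proof (cases "\<gamma> j = 1")
      case True
      have fe: "(\<lambda>w. ln (bern (\<gamma> j) (m j w))) = (\<lambda>w. ln (m j w))"
        using bern_cases[OF Bj[OF g j]] True by auto
      have ce: "inverse (m j \<omega>) = c \<gamma> j" unfolding c_def using True m0 by (simp add: field_simps)
      show ?thesis unfolding fe
        using GDERIV_DERIV_compose[OF gG[OF j] DERIV_ln[OF m0(1)]] ce by simp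
    next
      case False
      then have g0: "\<gamma> j = 0" using Bj[OF g j] by auto
      have fe: "(\<lambda>w. ln (bern (\<gamma> j) (m j w))) = (\<lambda>w. ln (1 - m j w))"
        using bern_cases[OF Bj[OF g j]] False by auto
      have d1: "GDERIV (\<lambda>w. 1 - m j w) \<omega> :> 0 - G j"
        by (rule GDERIV_diff[OF GDERIV_const gG[OF j]])
      have pos1: "0 < 1 - m j \<omega>" using m0 by simp
      have ce: "inverse (1 - m j \<omega>) *\<^sub>R (0 - G j) = c \<gamma> j *\<^sub>R G j"
        unfolding c_def using g0 m0 by (simp add: field_simps)
      show ?thesis unfolding fe
        using GDERIV_DERIV_compose[OF d1 DERIV_ln[OF pos1]] ce by simp
    qed
  qed
  have gl: "grad (\<lambda>w. ln (bern_prior p m \<gamma> w)) \<omega> = (\<Sum>j=1..p. c \<gamma> j *\<^sub>R G j)"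
    if g: "\<gamma> \<in> B" for \<gamma>
  proof -
    have "(\<lambda>w. ln (bern_prior p m \<gamma> w)) = (\<lambda>w. \<Sum>j=1..p. ln (bern (\<gamma> j) (m j w)))"
      unfolding bern_prior_def by (intro ext ln_prod) (simp, metis bpos[OF g] order_less_irrefl)
    then show ?thesis using GDERIV_sum[of "{1..p}", OF _ dterm[OF g]] by (simp add: grad_eq)
  qed
  define q where "q \<gamma> = post B lik (bern_prior p m) \<gamma> \<omega>" for \<gamma>
  have sumq: "(\<Sum>\<gamma>\<in>B. q \<gamma>) = 1"
  proof -
    have "marg B lik (bern_prior p m) \<omega> > 0" using mpos unfolding B_def by blast
    then show ?thesis unfolding q_def post_def
      by (simp add: sum_divide_distrib[symmetric] marg_def[symmetric])
  qed
  have incl: "incl_post B lik (bern_prior p m) (\<lambda>\<gamma>. \<gamma>) j \<omega> = (\<Sum>\<gamma>\<in>B. q \<gamma> * real (\<gamma> j))"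
    if j: "j \<in> {1..p}" for j
  proof -
    have "incl_post B lik (bern_prior p m) (\<lambda>\<gamma>. \<gamma>) j \<omega> = (\<Sum>\<gamma>\<in>B. if \<gamma> j = 1 then q \<gamma> else 0)"
      unfolding incl_post_def q_def by (simp add: sum.inter_filter[OF finB])
    also have "\<dots> = (\<Sum>\<gamma>\<in>B. q \<gamma> * real (\<gamma> j))"
      by (rule sum.cong[OF refl]) (use Bj j in fastforce)
    finally show ?thesis .
  qed
  have coef: "(\<Sum>\<gamma>\<in>B. q \<gamma> * c \<gamma> j) = (incl_post B lik (bern_prior p m) (\<lambda>\<gamma>. \<gamma>) j \<omega> - m j \<omega>)
                         / (m j \<omega> * (1 - m j \<omega>))" if j: "j \<in> {1..p}" for j
  proof -
    have "(\<Sum>\<gamma>\<in>B. q \<gamma> * c \<gamma> j) = (\<Sum>\<gamma>\<in>B. q \<gamma> * real (\<gamma> j) - m j \<omega> * q \<gamma>) / (m j \<omega> * (1 - m j \<omega>))"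
      unfolding c_def sum_divide_distrib by (rule sum.cong[OF refl]) (simp add: algebra_simps)
    also have "\<dots> = (incl_post B lik (bern_prior p m) (\<lambda>\<gamma>. \<gamma>) j \<omega> - m j \<omega>) / (m j \<omega> * (1 - m j \<omega>))"
      by (simp add: sum_subtractf incl[OF j] sum_distrib_left[symmetric] sumq)
    finally show ?thesis .
  qed
  have "(\<Sum>\<gamma>\<in>B. q \<gamma> *\<^sub>R grad (\<lambda>w. ln (bern_prior p m \<gamma> w)) \<omega>)
      = (\<Sum>\<gamma>\<in>B. \<Sum>j=1..p. (q \<gamma> * c \<gamma> j) *\<^sub>R G j)"
    by (rule sum.cong[OF refl]) (simp add: gl scaleR_sum_right)
  also have "\<dots> = (\<Sum>j=1..p. (\<Sum>\<gamma>\<in>B. q \<gamma> * c \<gamma> j) *\<^sub>R G j)"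
    by (simp add: sum.swap[of _ B] scaleR_sum_left)
  also have "\<dots> = (\<Sum>j=1..p. ((incl_post B lik (bern_prior p m) (\<lambda>\<gamma>. \<gamma>) j \<omega> - m j \<omega>)
                         / (m j \<omega> * (1 - m j \<omega>))) *\<^sub>R G j)"
    by (rule sum.cong[OF refl]) (simp add: coef)
  finally show ?thesis using P1 unfolding q_def G_def B_def by simp
qed


lemma inv_logit_bounds: "0 < inv_logit z w" "inv_logit z w < 1"
  unfolding inv_logit_def by (auto simp: divide_simps add_pos_pos)

lemma GDERIV_inner: "GDERIV (\<lambda>w. z \<bullet> w) x :> z"
proof -
  have e: "(\<lambda>w. z \<bullet> w) = (\<lambda>w. w \<bullet> z)" by (rule ext, rule inner_commute)
  have "((\<lambda>w. w \<bullet> z) has_derivative (\<lambda>h. h \<bullet> z)) (at x)"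
    using has_derivative_inner_right[of "\<lambda>w. w" "\<lambda>w. w" "at x" z, OF has_derivative_ident]
    by (simp add: inner_commute)
  then show ?thesis unfolding gderiv_def e .
qed

lemma DERIV_logistic:
  "DERIV (\<lambda>t::real. 1 / (1 + exp (- t))) t :> (1 / (1 + exp (- t))) * (1 - 1 / (1 + exp (- t)))"
proof -
  have p: "1 + exp (- t) \<noteq> 0" by (metis add_pos_pos exp_gt_zero less_numeral_extra(1) order_less_irrefl)
  have "DERIV (\<lambda>t::real. 1 / (1 + exp (- t))) t :> exp (- t) / (1 + exp (- t))^2"
    using p by (auto intro!: derivative_eq_intros simp: power2_eq_square field_simps)
  moreover have "exp (- t) / (1 + exp (- t))^2 = (1 / (1 + exp (- t))) * (1 - 1 / (1 + exp (- t)))"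
    using p by (simp add: field_simps power2_eq_square)
  ultimately show ?thesis by simp
qed

lemma GDERIV_inv_logit:
  "GDERIV (inv_logit z) w :> (inv_logit z w * (1 - inv_logit z w)) *\<^sub>R z"
proof -
  have "GDERIV (\<lambda>w. 1 / (1 + exp (- (z \<bullet> w)))) w :>
     ((1 / (1 + exp (- (z \<bullet> w)))) * (1 - 1 / (1 + exp (- (z \<bullet> w))))) *\<^sub>R z"
    by (rule GDERIV_DERIV_compose[OF GDERIV_inner DERIV_logistic])
  then show ?thesis unfolding inv_logit_def[abs_def] by simp
qed

theorem theorem3:
  shows
  "(\<forall>(\<Gamma>::'g set) (lik::'g \<Rightarrow> real) (prior::'g \<Rightarrow> real^'q \<Rightarrow> real) \<omega>.
      finite \<Gamma> \<and> (\<forall>\<gamma>\<in>\<Gamma>. lik \<gamma> \<ge> 0)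
      \<and> (\<forall>\<gamma>\<in>\<Gamma>. \<forall>w. prior \<gamma> w > 0 \<and> prior \<gamma> differentiable (at w))
      \<and> (\<forall>w. marg \<Gamma> lik prior w > 0)
      \<longrightarrow> GDERIV (\<lambda>w. ln (marg \<Gamma> lik prior w)) \<omega> :>
            (\<Sum>\<gamma>\<in>\<Gamma>. post \<Gamma> lik prior \<gamma> \<omega> *\<^sub>R grad (\<lambda>w. ln (prior \<gamma> w)) \<omega>))
   \<and>
   (\<forall>(p::nat) (lik::(nat \<Rightarrow> nat) \<Rightarrow> real) (m::nat \<Rightarrow> real^'q \<Rightarrow> real) \<omega>.
      (\<forall>\<gamma>\<in>binary_models p. lik \<gamma> \<ge> 0)
      \<and> (\<forall>j\<in>{1..p}. \<forall>w. 0 < m j w \<and> m j w < 1 \<and> m j differentiable (at w))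
      \<and> (\<forall>w. marg (binary_models p) lik (bern_prior p m) w > 0)
      \<longrightarrow> GDERIV (\<lambda>w. ln (marg (binary_models p) lik (bern_prior p m) w)) \<omega> :>
            (\<Sum>j=1..p. ((incl_post (binary_models p) lik (bern_prior p m) (\<lambda>\<gamma>. \<gamma>) j \<omega> - m j \<omega>)
                         / (m j \<omega> * (1 - m j \<omega>))) *\<^sub>R grad (m j) \<omega>))
   \<and>
   (\<forall>(p::nat) (lik::(nat \<Rightarrow> nat) \<Rightarrow> real) (z::nat \<Rightarrow> real^'q) \<omega>.
      (\<forall>\<gamma>\<in>binary_models p. lik \<gamma> \<ge> 0)
      \<and> (\<forall>w. marg (binary_models p) lik (bern_prior p (\<lambda>j. inv_logit (z j))) w > 0)
      \<longrightarrow> GDERIV (\<lambda>w. ln (marg (binary_models p) lik (bern_prior p (\<lambda>j. inv_logit (z j))) w)) \<omega> :>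
            (\<Sum>j=1..p. (incl_post (binary_models p) lik (bern_prior p (\<lambda>j. inv_logit (z j))) (\<lambda>\<gamma>. \<gamma>) j \<omega>
                         - inv_logit (z j) \<omega>) *\<^sub>R z j))"
proof (intro conjI allI impI)
  fix \<Gamma> :: "'g set" and lik :: "'g \<Rightarrow> real" and prior :: "'g \<Rightarrow> real^'q \<Rightarrow> real" and \<omega>
  assume H: "finite \<Gamma> \<and> (\<forall>\<gamma>\<in>\<Gamma>. lik \<gamma> \<ge> 0)
      \<and> (\<forall>\<gamma>\<in>\<Gamma>. \<forall>w. prior \<gamma> w > 0 \<and> prior \<gamma> differentiable (at w))
      \<and> (\<forall>w. marg \<Gamma> lik prior w > 0)"
  show "GDERIV (\<lambda>w. ln (marg \<Gamma> lik prior w)) \<omega> :>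
            (\<Sum>\<gamma>\<in>\<Gamma>. post \<Gamma> lik prior \<gamma> \<omega> *\<^sub>R grad (\<lambda>w. ln (prior \<gamma> w)) \<omega>)"
    by (rule part1) (use H in auto)
next
  fix p :: nat and lik :: "(nat \<Rightarrow> nat) \<Rightarrow> real" and m :: "nat \<Rightarrow> real^'q \<Rightarrow> real" and \<omega>
  assume H: "(\<forall>\<gamma>\<in>binary_models p. lik \<gamma> \<ge> 0)
      \<and> (\<forall>j\<in>{1..p}. \<forall>w. 0 < m j w \<and> m j w < 1 \<and> m j differentiable (at w))
      \<and> (\<forall>w. marg (binary_models p) lik (bern_prior p m) w > 0)"
  show "GDERIV (\<lambda>w. ln (marg (binary_models p) lik (bern_prior p m) w)) \<omega> :>
            (\<Sum>j=1..p. ((incl_post (binary_models p) lik (bern_prior p m) (\<lambda>\<gamma>. \<gamma>) j \<omega> - m j \<omega>)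
                         / (m j \<omega> * (1 - m j \<omega>))) *\<^sub>R grad (m j) \<omega>)"
    by (rule part2) (use H in auto)
next
  fix p :: nat and lik :: "(nat \<Rightarrow> nat) \<Rightarrow> real" and z :: "nat \<Rightarrow> real^'q" and \<omega>
  assume H: "(\<forall>\<gamma>\<in>binary_models p. lik \<gamma> \<ge> 0)
      \<and> (\<forall>w. marg (binary_models p) lik (bern_prior p (\<lambda>j. inv_logit (z j))) w > 0)"
  let ?m = "\<lambda>j. inv_logit (z j)"
  have P: "GDERIV (\<lambda>w. ln (marg (binary_models p) lik (bern_prior p ?m) w)) \<omega> :>
            (\<Sum>j=1..p. ((incl_post (binary_models p) lik (bern_prior p ?m) (\<lambda>\<gamma>. \<gamma>) j \<omega> - ?m j \<omega>)
                         / (?m j \<omega> * (1 - ?m j \<omega>))) *\<^sub>R grad (?m j) \<omega>)"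
    by (rule part2) (use H inv_logit_bounds gderiv_differentiable[OF GDERIV_inv_logit] in auto)
  have "((incl_post (binary_models p) lik (bern_prior p ?m) (\<lambda>\<gamma>. \<gamma>) j \<omega> - ?m j \<omega>)
                         / (?m j \<omega> * (1 - ?m j \<omega>))) *\<^sub>R grad (?m j) \<omega>
      = (incl_post (binary_models p) lik (bern_prior p ?m) (\<lambda>\<gamma>. \<gamma>) j \<omega> - ?m j \<omega>) *\<^sub>R z j" for j
  proof -
    have "?m j \<omega> * (1 - ?m j \<omega>) \<noteq> 0" using inv_logit_bounds[of "z j" \<omega>] by simp
    then show ?thesis by (simp add: grad_eq[OF GDERIV_inv_logit])
  qed
  then show "GDERIV (\<lambda>w. ln (marg (binary_models p) lik (bern_prior p ?m) w)) \<omega> :>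
            (\<Sum>j=1..p. (incl_post (binary_models p) lik (bern_prior p ?m) (\<lambda>\<gamma>. \<gamma>) j \<omega>
                         - ?m j \<omega>) *\<^sub>R z j)"
    using P by simp
qed

end
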